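(* Let $(S,\mu)$ be a complete positive measure space which is non-atomic. (i) If $\mu$ is $\sigma$-finite and $X$ is a real Banach space whose norm is Fréchet differentiable, then $L^1(\mu,X)$ has no non-zero left symmetric point. (ii) If $X$ is a real Banach space whose norm is Fréchet differentiable, then $L^1(\mu,X)$ has no non-zero right symmetric point. (iii) If $X$ is a Banach space whose norm is Fréchet differentiable and $1<p<\infty$, $p\neq2$, then $L^p(\mu,X)$ has no non-zero left symmetric point and no non-zero right symmetric point.
   Context: $L^p(\mu,X)$ ($1\le p<\infty$) is the Lebesgue–Bochner space of (classes of a.e. equal) strongly measurable $f:S\to X$ with $\int_S\|f(s)\|^p\,d\mu(s)<\infty$, normed by the $p$-th root of this integral. The measure is non-atomic if there is no atom, i.e. no measurable $A$ with $\mu(A)>0$ such that every measurable $B\subseteq A$ has $\mu(B)=0$ or $\mu(B)=\mu(A)$. In a normed space $Y$ over $\mathbb{K}$, $x\perp_{BJ}y$ means $\|x+\lambda y\|\ge\|x\|$ for all $\lambda\in\mathbb{K}$; $x$ is a left symmetric point if $x\perp_{BJ}y$ implies $y\perp_{BJ}x$ for all $y$, and a right symmetric point if $y\perp_{BJ}x$ implies $x\perp_{BJ}y$ for all $y$. The norm of $X$ is Fréchet differentiable if for every non-zero $x$ there is $\varphi\in X^*$ with $\lim_{h\to0}\big|\|x+h\|-\|x\|-\varphi(h)\big|/\|h\|=0$. *)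

theory Defs
  imports "HOL-Analysis.Analysis"
begin

definition non_atomic :: "'a measure \<Rightarrow> bool" where
  "non_atomic M \<longleftrightarrow> \<not> (\<exists>A\<in>sets M. emeasure M A > 0 \<and>
      (\<forall>B\<in>sets M. B \<subseteq> A \<longrightarrow> emeasure M B = 0 \<or> emeasure M B = emeasure M A))"

text \<open>Strong (Bochner) measurability: a.e. limit of measurable simple functions.
  No separability assumption on the Banach space is imposed.\<close>
definition strongly_measurable :: "'a measure \<Rightarrow> ('a \<Rightarrow> 'b::real_normed_vector) \<Rightarrow> bool" where
  "strongly_measurable M f \<longleftrightarrow>
     (\<exists>s. (\<forall>n. simple_function M (s n)) \<and> (AE x in M. (\<lambda>n. s n x) \<longlonglongrightarrow> f x))"

text \<open>Representatives of elements of the Lebesgue--Bochner space L^p(M,X).\<close>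
definition Lp :: "'a measure \<Rightarrow> real \<Rightarrow> ('a \<Rightarrow> 'b::real_normed_vector) set" where
  "Lp M p = {f. strongly_measurable M f \<and> (\<integral>\<^sup>+ x. ennreal (norm (f x) powr p) \<partial>M) < \<infinity>}"

definition Lp_norm :: "'a measure \<Rightarrow> real \<Rightarrow> ('a \<Rightarrow> 'b::real_normed_vector) \<Rightarrow> real" where
  "Lp_norm M p f = (enn2real (\<integral>\<^sup>+ x. ennreal (norm (f x) powr p) \<partial>M)) powr (1 / p)"

definition Lp_bj :: "'a measure \<Rightarrow> real \<Rightarrow> ('a \<Rightarrow> 'b::real_normed_vector) \<Rightarrow> ('a \<Rightarrow> 'b) \<Rightarrow> bool" where
  "Lp_bj M p f g \<longleftrightarrow> (\<forall>c::real. Lp_norm M p (\<lambda>x. f x + c *\<^sub>R g x) \<ge> Lp_norm M p f)"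

definition Lp_left_symmetric :: "'a measure \<Rightarrow> real \<Rightarrow> ('a \<Rightarrow> 'b::real_normed_vector) \<Rightarrow> bool" where
  "Lp_left_symmetric M p f \<longleftrightarrow> (\<forall>g\<in>Lp M p. Lp_bj M p f g \<longrightarrow> Lp_bj M p g f)"

definition Lp_right_symmetric :: "'a measure \<Rightarrow> real \<Rightarrow> ('a \<Rightarrow> 'b::real_normed_vector) \<Rightarrow> bool" where
  "Lp_right_symmetric M p f \<longleftrightarrow> (\<forall>g\<in>Lp M p. Lp_bj M p g f \<longrightarrow> Lp_bj M p f g)"

text \<open>Complex Banach spaces are modelled as real Banach spaces together with a complex
  structure J (multiplication by i) compatible with the norm: |a+ib| scaling.\<close>
definition complex_structure :: "('b::real_normed_vector \<Rightarrow> 'b) \<Rightarrow> bool" where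
  "complex_structure J \<longleftrightarrow> linear J \<and> (\<forall>x. J (J x) = - x) \<and>
     (\<forall>(a::real) (b::real) x. norm (a *\<^sub>R x + b *\<^sub>R J x) = cmod (Complex a b) * norm x)"

definition cscale :: "('b::real_normed_vector \<Rightarrow> 'b) \<Rightarrow> complex \<Rightarrow> 'b \<Rightarrow> 'b" where
  "cscale J c x = Re c *\<^sub>R x + Im c *\<^sub>R J x"

definition Lp_bjC :: "('b::real_normed_vector \<Rightarrow> 'b) \<Rightarrow> 'a measure \<Rightarrow> real \<Rightarrow> ('a \<Rightarrow> 'b) \<Rightarrow> ('a \<Rightarrow> 'b) \<Rightarrow> bool" where
  "Lp_bjC J M p f g \<longleftrightarrow> (\<forall>c::complex. Lp_norm M p (\<lambda>x. f x + cscale J c (g x)) \<ge> Lp_norm M p f)"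

definition Lp_left_symmetricC :: "('b::real_normed_vector \<Rightarrow> 'b) \<Rightarrow> 'a measure \<Rightarrow> real \<Rightarrow> ('a \<Rightarrow> 'b) \<Rightarrow> bool" where
  "Lp_left_symmetricC J M p f \<longleftrightarrow> (\<forall>g\<in>Lp M p. Lp_bjC J M p f g \<longrightarrow> Lp_bjC J M p g f)"

definition Lp_right_symmetricC :: "('b::real_normed_vector \<Rightarrow> 'b) \<Rightarrow> 'a measure \<Rightarrow> real \<Rightarrow> ('a \<Rightarrow> 'b) \<Rightarrow> bool" where
  "Lp_right_symmetricC J M p f \<longleftrightarrow> (\<forall>g\<in>Lp M p. Lp_bjC J M p g f \<longrightarrow> Lp_bjC J M p f g)"

definition frechet_norm :: "'b::real_normed_vector itself \<Rightarrow> bool" where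
  "frechet_norm _ \<longleftrightarrow> (\<forall>x::'b. x \<noteq> 0 \<longrightarrow> norm differentiable (at x))"

end

theory Submission
  imports Defs
begin


lemma bern:
  fixes p y :: real assumes "p \<ge> 1"
  shows "1 + p * (y - 1) \<le> \<bar>y\<bar> powr p"
proof (cases "p = 1")
  case True then show ?thesis by simp
next
  case False
  with assms have p: "p > 1" by simp
  define q where "q = p / (p - 1)"
  have q: "q > 1" "1/p + 1/q = 1" using p by (auto simp: q_def field_simps)
  have "\<bar>y\<bar> * 1 \<le> \<bar>y\<bar> powr p / p + 1 powr q / q"
    by (rule Youngs_inequality[OF p q]) auto
  then have "p * \<bar>y\<bar> \<le> \<bar>y\<bar> powr p + p / q" using p by (simp add: field_simps)
  moreover have "p / q = p - 1" using p by (simp add: q_def field_simps)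
  moreover have "p * y \<le> p * \<bar>y\<bar>" using p by (intro mult_left_mono) auto
  ultimately show ?thesis by (simp add: algebra_simps)
qed

lemma deriv_dec:
  fixes \<phi> :: "real \<Rightarrow> real"
  assumes "DERIV \<phi> 0 :> D" "D \<noteq> 0" "r > 0"
  shows "\<exists>c. \<bar>c\<bar> < r \<and> \<phi> c < \<phi> 0"
proof (cases "D < 0")
  case True
  from DERIV_neg_dec_right[OF assms(1) True] obtain d where d: "d > 0" "\<forall>h>0. h < d \<longrightarrow> \<phi> 0 > \<phi> (0 + h)" by blast
  show ?thesis using d(2)[rule_format, of "min d r / 2"] d(1) assms(3)
    by (intro exI[of _ "min d r / 2"]) auto
next
  case False
  then have "D > 0" using assms(2) by simp
  from DERIV_pos_inc_left[OF assms(1) this] obtain d where d: "d > 0" "\<forall>h>0. h < d \<longrightarrow> \<phi> (0 - h) < \<phi> 0" by blast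
  show ?thesis using d(2)[rule_format, of "min d r / 2"] d(1) assms(3)
    by (intro exI[of _ "- (min d r / 2)"]) auto
qed

lemma L1_all:
  fixes a b p c :: real assumes "p \<ge> 1" "a > 0" "b > 0"
  shows "\<bar>1 + c\<bar> powr p * a + \<bar>1 + c * (- (a/b))\<bar> powr p * b \<ge> 1 powr p * a + 1 powr p * b"
proof -
  have "1 + p * c \<le> \<bar>1 + c\<bar> powr p" using bern[OF assms(1), of "1+c"] by simp
  moreover have "1 - p * c * (a/b) \<le> \<bar>1 + c * (- (a/b))\<bar> powr p"
    using bern[OF assms(1), of "1 + c * (- (a/b))"] by (simp add: algebra_simps)
  ultimately have "(1 + p * c) * a + (1 - p * c * (a/b)) * b \<le> \<bar>1 + c\<bar> powr p * a + \<bar>1 + c * (- (a/b))\<bar> powr p * b"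
    using assms by (intro add_mono mult_right_mono) auto
  moreover have "(1 + p * c) * a + (1 - p * c * (a/b)) * b = a + b" using assms by (simp add: field_simps)
  ultimately show ?thesis by simp
qed

lemma L1_ex:
  fixes a b p :: real assumes "p \<ge> 1" "p \<noteq> 2" "a > 0" "b > 0" "a \<noteq> b"
  shows "\<exists>c. \<bar>1 + c\<bar> powr p * a + \<bar>(- (a/b)) + c\<bar> powr p * b < \<bar>1\<bar> powr p * a + \<bar>- (a/b)\<bar> powr p * b"
proof -
  define t where "t = a / b"
  have t: "t > 0" "t \<noteq> 1" using assms by (auto simp: t_def)
  define \<phi> where "\<phi> = (\<lambda>c::real. (1 + c) powr p * a + (t - c) powr p * b)"
  have D: "DERIV \<phi> 0 :> p * 1 powr (p - 1) * 1 * a + p * t powr (p - 1) * (0 - 1) * b"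
    unfolding \<phi>_def using t by (auto intro!: derivative_eq_intros)
  have "t powr (p - 1) \<noteq> t powr 1"
    using t assms(2) powr_inj[of t "p - 1" 1] by auto
  then have "t powr (p - 1) * b \<noteq> a" using assms by (auto simp: t_def field_simps)
  then have "p * 1 powr (p - 1) * 1 * a + p * t powr (p - 1) * (0 - 1) * b \<noteq> 0"
    using assms by (auto simp: algebra_simps)
  from deriv_dec[OF D this, of "min 1 t"] t obtain c where c: "\<bar>c\<bar> < min 1 t" "\<phi> c < \<phi> 0" by auto
  have e: "\<bar>1 + c\<bar> = 1 + c" "\<bar>(- (a/b)) + c\<bar> = t - c" using c by (auto simp: t_def)
  show ?thesis using c t apply (intro exI[of _ c]) apply (simp only: e) by (simp add: \<phi>_def t_def[symmetric])
qed

lemma L2: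
  fixes a b p :: real assumes "p > 1" "p \<noteq> 2" "a > 0" "b > 0" "a \<noteq> b"
  obtains t where "t > 0"
    "\<And>c. \<bar>1 + c\<bar> powr p * a + \<bar>(- t) + c\<bar> powr p * b \<ge> \<bar>1\<bar> powr p * a + \<bar>- t\<bar> powr p * b"
    "\<exists>c. \<bar>1 + c\<bar> powr p * a + \<bar>1 + c * (- t)\<bar> powr p * b < 1 powr p * a + 1 powr p * b"
proof -
  define t where "t = (a/b) powr (1 / (p - 1))"
  have t: "t > 0" using assms by (simp add: t_def)
  have tp: "t powr (p - 1) = a / b" using assms by (simp add: t_def powr_powr)
  have tpp: "t powr p = t * (a / b)" using t tp powr_add[of t 1 "p - 1"] by simp
  have all: "\<bar>1 + c\<bar> powr p * a + \<bar>(- t) + c\<bar> powr p * b \<ge> \<bar>1\<bar> powr p * a + \<bar>- t\<bar> powr p * b" for c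
  proof -
    have "1 + p * c \<le> \<bar>1 + c\<bar> powr p" using bern[of p "1+c"] assms by simp
    moreover have "\<bar>(- t) + c\<bar> = t * \<bar>1 - c / t\<bar>" using t by (simp add: field_simps abs_mult[symmetric] abs_of_pos)
    then have "\<bar>(- t) + c\<bar> powr p = t powr p * \<bar>1 - c / t\<bar> powr p" using t by (simp add: powr_mult)
    moreover have "1 - p * (c / t) \<le> \<bar>1 - c / t\<bar> powr p" using bern[of p "1 - c/t"] assms by (simp add: algebra_simps)
    ultimately have "(1 + p * c) * a + t powr p * (1 - p * (c / t)) * b \<le> \<bar>1 + c\<bar> powr p * a + \<bar>(- t) + c\<bar> powr p * b"
      using assms t by (intro add_mono mult_right_mono) (auto intro!: mult_left_mono)
    moreover have "(1 + p * c) * a + t powr p * (1 - p * (c / t)) * b = a + t powr p * b"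
      unfolding tpp using assms t by (simp add: field_simps)
    ultimately show ?thesis using t by simp
  qed
  define \<phi> where "\<phi> = (\<lambda>c::real. (1 + c) powr p * a + (1 - t * c) powr p * b)"
  have D: "DERIV \<phi> 0 :> p * 1 powr (p - 1) * 1 * a + p * 1 powr (p - 1) * (0 - t * 1) * b"
    unfolding \<phi>_def using t by (auto intro!: derivative_eq_intros)
  have "a / b \<noteq> 1" using assms by simp
  then have "t \<noteq> (a/b) powr 1" unfolding t_def using assms powr_inj[of "a/b" "1 / (p - 1)" 1] by (auto simp: field_simps)
  then have "t * b \<noteq> a" using assms by (auto simp: field_simps)
  then have "p * 1 powr (p - 1) * 1 * a + p * 1 powr (p - 1) * (0 - t * 1) * b \<noteq> 0"
    using assms by (auto simp: algebra_simps)
  from deriv_dec[OF D this, of "min 1 (1/t)"] t obtain c where c: "\<bar>c\<bar> < min 1 (1/t)" "\<phi> c < \<phi> 0" by auto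
  have "\<bar>t * c\<bar> < 1" using c t by (simp add: abs_mult field_simps)
  then have e: "\<bar>1 + c\<bar> = 1 + c" "\<bar>1 + c * (- t)\<bar> = 1 - t * c" using c by (auto simp: algebra_simps)
  have "\<exists>c. \<bar>1 + c\<bar> powr p * a + \<bar>1 + c * (- t)\<bar> powr p * b < 1 powr p * a + 1 powr p * b"
    using c apply (intro exI[of _ c]) apply (simp only: e) by (simp add: \<phi>_def)
  with that[OF t all] show ?thesis by blast
qed



lemma sm_meas:
  assumes "strongly_measurable M f"
  obtains f' N where "f' \<in> borel_measurable M" "N \<in> null_sets M" "\<And>x. x \<notin> N \<Longrightarrow> f' x = f x"
    "\<And>x. x \<in> N \<Longrightarrow> f' x = 0"
proof -
  from assms obtain s where s: "\<And>n. simple_function M (s n)" "AE x in M. (\<lambda>n. s n x) \<longlonglongrightarrow> f x"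
    unfolding strongly_measurable_def by blast
  from AE_E[OF s(2)] obtain N where N: "{x\<in>space M. \<not> (\<lambda>n. s n x) \<longlonglongrightarrow> f x} \<subseteq> N" "emeasure M N = 0" "N \<in> sets M"
    by blast
  define f' where "f' x = (if x \<in> N then 0 else f x)" for x
  have "f' \<in> borel_measurable M"
  proof (rule borel_measurable_LIMSEQ_metric[where f="\<lambda>n x. if x \<in> N then 0 else s n x"])
    show "(\<lambda>x. if x \<in> N then 0 else s n x) \<in> borel_measurable M" for n
      using borel_measurable_simple_function[OF s(1)] N(3)
      by (intro measurable_If_set) auto
    show "(\<lambda>n. if x \<in> N then 0 else s n x) \<longlonglongrightarrow> f' x" if "x \<in> space M" for x
      using N(1) that by (cases "x \<in> N") (auto simp: f'_def)
  qed
  then show ?thesis using N by (intro that[of f' N]) (auto simp: f'_def null_sets_def)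
qed

lemma prep_parts:
  fixes f :: "'a \<Rightarrow> 'b::real_normed_vector" and p :: real
  assumes na: "non_atomic M" and fL: "f \<in> Lp M p" and p: "p > 0" and nz: "Lp_norm M p f \<noteq> 0"
  obtains A B a b where "A \<in> sets M" "B \<in> sets M" "A \<inter> B = {}" "0 < a" "a < b"
    "\<And>(u::'a \<Rightarrow> 'b) K K1 K2. (\<And>x. x \<in> space M \<Longrightarrow> norm (u x) = K x * norm (f x)) \<Longrightarrow> (\<And>x. x \<in> space M \<Longrightarrow> 0 \<le> K x)
       \<Longrightarrow> (\<And>x. x \<in> A \<Longrightarrow> K x = K1) \<Longrightarrow> (\<And>x. x \<in> B \<Longrightarrow> K x = K2)
       \<Longrightarrow> (\<integral>\<^sup>+x. ennreal (norm (u x) powr p) \<partial>M) = ennreal (K1 powr p * a + K2 powr p * b)"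
    "\<And>\<alpha> \<beta>. (\<lambda>x. (\<alpha> * indicator A x + \<beta> * indicator B x) *\<^sub>R f x) \<in> Lp M p"
proof -
  from fL have sm: "strongly_measurable M f" and fin: "(\<integral>\<^sup>+x. ennreal (norm (f x) powr p) \<partial>M) < \<infinity>"
    by (auto simp: Lp_def)
  from sm obtain s where s: "\<And>n. simple_function M (s n)" "AE x in M. (\<lambda>n. s n x) \<longlonglongrightarrow> f x"
    unfolding strongly_measurable_def by blast
  obtain f' N where f': "f' \<in> borel_measurable M" "N \<in> null_sets M" "\<And>x. x \<notin> N \<Longrightarrow> f' x = f x"
    "\<And>x. x \<in> N \<Longrightarrow> f' x = 0" using sm_meas[OF sm] by blast
  note [measurable] = f'(1)
  define W where "W x = ennreal (norm (f' x) powr p)" for x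
  have Wm[measurable]: "W \<in> borel_measurable M" unfolding W_def by measurable
  define Z where "Z = {x \<in> space M. f' x \<noteq> 0}"
  have Zs[measurable]: "Z \<in> sets M" unfolding Z_def by measurable
  have AEf: "AE x in M. f' x = f x"
    by (rule AE_mp[OF AE_not_in[OF f'(2)]], rule AE_I2) (auto simp: f'(3))
  define \<nu> where "\<nu> E = (\<integral>\<^sup>+x. W x * indicator E x \<partial>M)" for E
  have intW: "(\<integral>\<^sup>+x. W x \<partial>M) = (\<integral>\<^sup>+x. ennreal (norm (f x) powr p) \<partial>M)"
    by (rule nn_integral_cong_AE, rule AE_mp[OF AEf], rule AE_I2) (auto simp: W_def)
  have I0: "(\<integral>\<^sup>+x. W x \<partial>M) \<noteq> 0"
  proof
    assume "(\<integral>\<^sup>+x. W x \<partial>M) = 0"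
    then have "Lp_norm M p f = 0" by (simp add: Lp_norm_def intW[symmetric])
    with nz show False by simp
  qed
  have Ifin: "(\<integral>\<^sup>+x. W x \<partial>M) < \<infinity>" using fin intW by simp
  have Wpos: "W x > 0" if "x \<in> Z" for x using that p by (simp add: W_def Z_def)
  have W0: "W x = 0" if "x \<notin> Z" "x \<in> space M" for x using that by (simp add: W_def Z_def)
  have \<nu>pos: "\<nu> E > 0" if E: "E \<in> sets M" "E \<subseteq> Z" "emeasure M E > 0" for E
  proof (rule ccontr)
    assume "\<not> \<nu> E > 0"
    then have "\<nu> E = 0" by (simp add: not_gr_zero)
    then have "AE x in M. W x * indicator E x = 0" unfolding \<nu>_def
      using E by (subst nn_integral_0_iff_AE[symmetric]) auto
    then have "AE x in M. x \<notin> E"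
    proof (rule AE_mp, intro AE_I2 impI)
      fix x assume "x \<in> space M" "W x * indicator E x = 0"
      then show "x \<notin> E" using E(2) Wpos[of x] by (cases "x \<in> E") auto
    qed
    then have "E \<in> null_sets M" using AE_iff_null_sets E by blast
    with E show False by auto
  qed
  have \<nu>fin: "\<nu> E < \<infinity>" for E
  proof -
    have "\<nu> E \<le> (\<integral>\<^sup>+x. W x \<partial>M)" unfolding \<nu>_def
      by (intro nn_integral_mono) (auto simp: indicator_def)
    then show ?thesis using Ifin by (simp add: order_le_less_trans)
  qed
  have \<nu>add: "\<nu> (E1 \<union> E2) = \<nu> E1 + \<nu> E2" if "E1 \<in> sets M" "E2 \<in> sets M" "E1 \<inter> E2 = {}" for E1 E2
  proof -
    have "\<nu> (E1 \<union> E2) = (\<integral>\<^sup>+x. W x * indicator E1 x + W x * indicator E2 x \<partial>M)"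
      unfolding \<nu>_def using that by (intro nn_integral_cong) (auto simp: indicator_def)
    also have "\<dots> = \<nu> E1 + \<nu> E2" unfolding \<nu>_def using that by (intro nn_integral_add) auto
    finally show ?thesis .
  qed
  define r where "r E = enn2real (\<nu> E)" for E
  have r\<nu>: "\<nu> E = ennreal (r E)" for E using \<nu>fin[of E] by (simp add: r_def)
  have rnn: "r E \<ge> 0" for E by (simp add: r_def)
  have rpos: "r E > 0" if "E \<in> sets M" "E \<subseteq> Z" "emeasure M E > 0" for E
    using \<nu>pos[OF that] unfolding r\<nu> by simp
  have radd: "r (E1 \<union> E2) = r E1 + r E2" if "E1 \<in> sets M" "E2 \<in> sets M" "E1 \<inter> E2 = {}" for E1 E2
    using \<nu>add[OF that] \<nu>fin unfolding r_def by (simp add: enn2real_plus)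
  have split: "\<exists>D\<in>sets M. D \<subseteq> C \<and> emeasure M D > 0 \<and> emeasure M (C - D) > 0"
    if C: "C \<in> sets M" "emeasure M C > 0" for C
  proof -
    from na C obtain D where D: "D \<in> sets M" "D \<subseteq> C" "emeasure M D \<noteq> 0" "emeasure M D \<noteq> emeasure M C"
      unfolding non_atomic_def by blast
    have "emeasure M (C - D) \<noteq> 0"
    proof
      assume 0: "emeasure M (C - D) = 0"
      have "emeasure M C \<le> emeasure M D + emeasure M (C - D)"
        using emeasure_subadditive[of D M "C - D"] D C by (simp add: Un_absorb1 Un_Diff_cancel)
      moreover have "emeasure M D \<le> emeasure M C" using D C by (intro emeasure_mono) auto
      ultimately show False using 0 D by simp
    qed
    with D show ?thesis by (auto simp: zero_less_iff_neq_zero)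
  qed
  have Zpos: "emeasure M Z > 0"
  proof (rule ccontr)
    assume "\<not> emeasure M Z > 0"
    then have "Z \<in> null_sets M" by (simp add: not_gr_zero null_sets_def)
    then have "AE x in M. x \<notin> Z" by (rule AE_not_in)
    then have "AE x in M. W x = 0" by (rule AE_mp, intro AE_I2) (auto intro: W0)
    then have "(\<integral>\<^sup>+x. W x \<partial>M) = 0" by (simp add: nn_integral_0_iff_AE)
    with I0 show False by simp
  qed
  obtain P Q where PQ: "P \<in> sets M" "Q \<in> sets M" "P \<inter> Q = {}" "P \<union> Q = Z" "r P > 0" "r Q > 0" "r P \<noteq> r Q"
  proof -
    from split[OF Zs Zpos] obtain D where D: "D \<in> sets M" "D \<subseteq> Z" "emeasure M D > 0" "emeasure M (Z - D) > 0"
      by blast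
    have rD: "r D > 0" "r (Z - D) > 0" using D by (auto intro!: rpos)
    show ?thesis
    proof (cases "r D = r (Z - D)")
      case False
      then show ?thesis using D rD by (intro that[of D "Z - D"]) auto
    next
      case True
      from split[OF D(1) D(3)] obtain D2 where D2: "D2 \<in> sets M" "D2 \<subseteq> D" "emeasure M D2 > 0" "emeasure M (D - D2) > 0"
        by blast
      have r2: "r D2 > 0" "r (D - D2) > 0" using D2 D by (auto intro!: rpos)
      have e1: "r D = r D2 + r (D - D2)" using radd[of D2 "D - D2"] D2 D
        by (simp add: Un_absorb1 Un_Diff_cancel)
      have e2: "r (Z - D2) = r (D - D2) + r (Z - D)"
      proof -
        have "Z - D2 = (D - D2) \<union> (Z - D)" using D D2 by auto
        then show ?thesis using radd[of "D - D2" "Z - D"] D D2 by auto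
      qed
      show ?thesis using D D2 r2 e1 e2 True by (intro that[of D2 "Z - D2"]) auto
    qed
  qed
  have formula: "(\<integral>\<^sup>+x. ennreal (norm (u x) powr p) \<partial>M) = ennreal (K1 powr p * r A + K2 powr p * r B)"
    if AB: "A \<in> sets M" "B \<in> sets M" "A \<inter> B = {}" "A \<union> B = Z"
      and u: "\<And>x. x \<in> space M \<Longrightarrow> norm (u x) = K x * norm (f x)" "\<And>x. x \<in> space M \<Longrightarrow> 0 \<le> K x"
        "\<And>x. x \<in> A \<Longrightarrow> K x = K1" "\<And>x. x \<in> B \<Longrightarrow> K x = K2"
    for A B u K K1 K2
  proof -
    have "(\<integral>\<^sup>+x. ennreal (norm (u x) powr p) \<partial>M) = (\<integral>\<^sup>+x. ennreal (K x powr p) * W x \<partial>M)"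
    proof (rule nn_integral_cong_AE, rule AE_mp[OF AEf], rule AE_I2, rule impI)
      fix x assume x: "x \<in> space M" "f' x = f x"
      have "norm (u x) powr p = K x powr p * norm (f x) powr p"
        using u(1,2)[OF x(1)] by (simp add: powr_mult)
      then show "ennreal (norm (u x) powr p) = ennreal (K x powr p) * W x"
        using x by (simp add: W_def ennreal_mult)
    qed
    also have "\<dots> = (\<integral>\<^sup>+x. ennreal (K1 powr p) * (W x * indicator A x) + ennreal (K2 powr p) * (W x * indicator B x) \<partial>M)"
    proof (rule nn_integral_cong)
      fix x assume x: "x \<in> space M"
      show "ennreal (K x powr p) * W x = ennreal (K1 powr p) * (W x * indicator A x) + ennreal (K2 powr p) * (W x * indicator B x)"
      proof (cases "x \<in> A")
        case True then show ?thesis using AB u by (auto simp: indicator_def)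
      next
        case nA: False
        show ?thesis
        proof (cases "x \<in> B")
          case True then show ?thesis using AB u nA by (auto simp: indicator_def)
        next
          case False
          then have "x \<notin> Z" using nA AB by auto
          then show ?thesis using W0[OF _ x] nA False by (simp add: indicator_def)
        qed
      qed
    qed
    also have "\<dots> = ennreal (K1 powr p) * \<nu> A + ennreal (K2 powr p) * \<nu> B"
      unfolding \<nu>_def using AB by (subst nn_integral_add) (auto simp: nn_integral_cmult)
    also have "\<dots> = ennreal (K1 powr p * r A + K2 powr p * r B)"
      unfolding r\<nu> using rnn[of A] rnn[of B]
      by (simp add: ennreal_mult ennreal_plus)
    finally show ?thesis .
  qed
  have member: "(\<lambda>x. (\<alpha> * indicator A x + \<beta> * indicator B x) *\<^sub>R f x) \<in> Lp M p"
    if AB: "A \<in> sets M" "B \<in> sets M" "A \<inter> B = {}" "A \<union> B = Z" for A B \<alpha> \<beta>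
  proof -
    define h where "h x = \<alpha> * indicator A x + \<beta> * indicator B x" for x :: 'a
    have hs: "simple_function M h" unfolding h_def
      using AB by (intro simple_function_compose2[where h="\<lambda>u v. \<alpha> * u + \<beta> * v"]) auto
    have "strongly_measurable M (\<lambda>x. h x *\<^sub>R f x)"
      unfolding strongly_measurable_def
    proof (intro exI[of _ "\<lambda>n x. h x *\<^sub>R s n x"] conjI allI)
      show "simple_function M (\<lambda>x. h x *\<^sub>R s n x)" for n
        using hs s(1) by (rule simple_function_compose2)
      show "AE x in M. (\<lambda>n. h x *\<^sub>R s n x) \<longlonglongrightarrow> h x *\<^sub>R f x"
        using s(2) by (rule AE_mp) (auto intro!: AE_I2 tendsto_scaleR)
    qed
    moreover have "(\<integral>\<^sup>+x. ennreal (norm (h x *\<^sub>R f x) powr p) \<partial>M) < \<infinity>"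
      using AB by (subst formula[of A B _ "\<lambda>x. \<bar>h x\<bar>" "\<bar>\<alpha>\<bar>" "\<bar>\<beta>\<bar>"]) (auto simp: h_def indicator_def)
    ultimately show ?thesis by (simp add: Lp_def h_def)
  qed
  show ?thesis
  proof (cases "r P < r Q")
    case True
    show ?thesis
    proof (rule that[of P Q "r P" "r Q"])
      fix u K K1 K2
      assume a1: "\<And>x. x \<in> space M \<Longrightarrow> norm (u x) = K x * norm (f x)"
        and a2: "\<And>x. x \<in> space M \<Longrightarrow> 0 \<le> K x" and a3: "\<And>x. x \<in> P \<Longrightarrow> K x = K1"
        and a4: "\<And>x. x \<in> Q \<Longrightarrow> K x = K2"
      show "(\<integral>\<^sup>+x. ennreal (norm (u x) powr p) \<partial>M) = ennreal (K1 powr p * r P + K2 powr p * r Q)"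
        by (rule formula[OF _ _ _ _ a1 a2 a3 a4]) (use PQ in auto)
    next
      fix \<alpha> \<beta>
      show "(\<lambda>x. (\<alpha> * indicator P x + \<beta> * indicator Q x) *\<^sub>R f x) \<in> Lp M p"
        by (rule member) (use PQ in auto)
    qed (use PQ True in auto)
  next
    case False
    then have "r Q < r P" using PQ by simp
    show ?thesis
    proof (rule that[of Q P "r Q" "r P"])
      fix u K K1 K2
      assume a1: "\<And>x. x \<in> space M \<Longrightarrow> norm (u x) = K x * norm (f x)"
        and a2: "\<And>x. x \<in> space M \<Longrightarrow> 0 \<le> K x" and a3: "\<And>x. x \<in> Q \<Longrightarrow> K x = K1"
        and a4: "\<And>x. x \<in> P \<Longrightarrow> K x = K2"
      show "(\<integral>\<^sup>+x. ennreal (norm (u x) powr p) \<partial>M) = ennreal (K1 powr p * r Q + K2 powr p * r P)"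
        by (rule formula[OF _ _ _ _ a1 a2 a3 a4]) (use PQ in auto)
    next
      fix \<alpha> \<beta>
      show "(\<lambda>x. (\<alpha> * indicator Q x + \<beta> * indicator P x) *\<^sub>R f x) \<in> Lp M p"
        by (rule member) (use PQ in auto)
    qed (use PQ \<open>r Q < r P\<close> in auto)
  qed
qed



lemma cnorm:
  assumes J: "complex_structure J"
  shows "norm (r *\<^sub>R y + cscale J c (s *\<^sub>R y)) = cmod (of_real r + c * of_real s) * norm y"
proof -
  from J have lin: "linear J" and nJ: "\<And>a b x. norm (a *\<^sub>R x + b *\<^sub>R J x) = cmod (Complex a b) * norm x"
    unfolding complex_structure_def by auto
  have "r *\<^sub>R y + cscale J c (s *\<^sub>R y) = (r + Re c * s) *\<^sub>R y + (Im c * s) *\<^sub>R J y"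
    unfolding cscale_def using linear_scale[OF lin, of s y] by (simp add: algebra_simps)
  also have "norm \<dots> = cmod (Complex (r + Re c * s) (Im c * s)) * norm y" by (rule nJ)
  also have "Complex (r + Re c * s) (Im c * s) = of_real r + c * of_real s" by (simp add: complex_eq_iff)
  finally show ?thesis .
qed

lemma cm1: "cmod (1 + complex_of_real r) = \<bar>1 + r\<bar>"
  by (metis norm_of_real of_real_1 of_real_add)
lemma cm2: "cmod (complex_of_real r + complex_of_real s) = \<bar>r + s\<bar>"
  by (metis norm_of_real of_real_add)
lemma reb1: "\<bar>1 + Re c * s\<bar> \<le> cmod (1 + c * complex_of_real s)"
  using abs_Re_le_cmod[of "1 + c * complex_of_real s"] by simp
lemma reb2: "\<bar>r + Re c\<bar> \<le> cmod (complex_of_real r + c)"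
  using abs_Re_le_cmod[of "complex_of_real r + c"] by simp

context
  fixes M :: "'a measure" and f :: "'a \<Rightarrow> 'b::real_normed_vector" and p a b :: real and A B :: "'a set"
  assumes AB: "A \<inter> B = {}" and ab: "0 < a" "a < b" and p1: "p \<ge> 1"
    and F: "\<And>(u::'a \<Rightarrow> 'b) K K1 K2. (\<And>x. x \<in> space M \<Longrightarrow> norm (u x) = K x * norm (f x)) \<Longrightarrow> (\<And>x. x \<in> space M \<Longrightarrow> 0 \<le> K x)
       \<Longrightarrow> (\<And>x. x \<in> A \<Longrightarrow> K x = K1) \<Longrightarrow> (\<And>x. x \<in> B \<Longrightarrow> K x = K2)
       \<Longrightarrow> Lp_norm M p u = (K1 powr p * a + K2 powr p * b) powr (1/p)"
    and Mem: "\<And>\<alpha> \<beta>. (\<lambda>x. (\<alpha> * indicator A x + \<beta> * indicator B x) *\<^sub>R f x) \<in> Lp M p"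
begin

lemma G_le:
  assumes "K1 powr p * a + K2 powr p * b \<le> L1 powr p * a + L2 powr p * b"
  shows "(K1 powr p * a + K2 powr p * b) powr (1/p) \<le> (L1 powr p * a + L2 powr p * b) powr (1/p)"
  using assms ab p1 by (intro powr_mono2) auto

lemma G_less:
  assumes "K1 powr p * a + K2 powr p * b < L1 powr p * a + L2 powr p * b"
  shows "(K1 powr p * a + K2 powr p * b) powr (1/p) < (L1 powr p * a + L2 powr p * b) powr (1/p)"
  using assms ab p1 by (intro powr_less_mono2) auto

lemma LN:
  "Lp_norm M p (\<lambda>x. (r + s * (\<alpha> * indicator A x + \<beta> * indicator B x)) *\<^sub>R f x)
     = (\<bar>r + s * \<alpha>\<bar> powr p * a + \<bar>r + s * \<beta>\<bar> powr p * b) powr (1/p)"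
  by (rule F[of _ "\<lambda>x. \<bar>r + s * (\<alpha> * indicator A x + \<beta> * indicator B x)\<bar>" "\<bar>r + s * \<alpha>\<bar>" "\<bar>r + s * \<beta>\<bar>"])
     (use AB in \<open>auto simp: indicator_def\<close>)

lemma LNC1:
  assumes J: "complex_structure J"
  shows "Lp_norm M p (\<lambda>x. f x + cscale J c ((\<alpha> * indicator A x + \<beta> * indicator B x) *\<^sub>R f x))
     = (cmod (1 + c * of_real \<alpha>) powr p * a + cmod (1 + c * of_real \<beta>) powr p * b) powr (1/p)"
proof (rule F[of _ "\<lambda>x. cmod (1 + c * of_real (\<alpha> * indicator A x + \<beta> * indicator B x))" "cmod (1 + c * of_real \<alpha>)" "cmod (1 + c * of_real \<beta>)"])
  fix x
  show "norm (f x + cscale J c ((\<alpha> * indicator A x + \<beta> * indicator B x) *\<^sub>R f x)) =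
    cmod (1 + c * of_real (\<alpha> * indicator A x + \<beta> * indicator B x)) * norm (f x)"
    using cnorm[OF J, of 1 "f x"] by simp
qed (use AB in \<open>auto simp: indicator_def\<close>)

lemma LNC2:
  assumes J: "complex_structure J"
  shows "Lp_norm M p (\<lambda>x. (\<alpha> * indicator A x + \<beta> * indicator B x) *\<^sub>R f x + cscale J c (f x))
     = (cmod (of_real \<alpha> + c) powr p * a + cmod (of_real \<beta> + c) powr p * b) powr (1/p)"
proof (rule F[of _ "\<lambda>x. cmod (of_real (\<alpha> * indicator A x + \<beta> * indicator B x) + c)" "cmod (of_real \<alpha> + c)" "cmod (of_real \<beta> + c)"])
  fix x
  show "norm ((\<alpha> * indicator A x + \<beta> * indicator B x) *\<^sub>R f x + cscale J c (f x)) =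
    cmod (of_real (\<alpha> * indicator A x + \<beta> * indicator B x) + c) * norm (f x)"
    using cnorm[OF J, of _ "f x" c 1] by simp
qed (use AB in \<open>auto simp: indicator_def\<close>)

lemma eq_forms:
  "(\<lambda>x. f x + c *\<^sub>R ((\<alpha> * indicator A x + \<beta> * indicator B x) *\<^sub>R f x))
     = (\<lambda>x. (1 + c * (\<alpha> * indicator A x + \<beta> * indicator B x)) *\<^sub>R f x)"
  "(\<lambda>x. (\<alpha> * indicator A x + \<beta> * indicator B x) *\<^sub>R f x + c *\<^sub>R f x)
     = (\<lambda>x. (c + 1 * (\<alpha> * indicator A x + \<beta> * indicator B x)) *\<^sub>R f x)"
  "f = (\<lambda>x. (1 + 0 * (\<alpha> * indicator A x + \<beta> * indicator B x)) *\<^sub>R f x)"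
  "(\<lambda>x. (\<alpha> * indicator A x + \<beta> * indicator B x) *\<^sub>R f x)
     = (\<lambda>x. (0 + 1 * (\<alpha> * indicator A x + \<beta> * indicator B x)) *\<^sub>R f x)"
  by (auto simp: algebra_simps)

lemma Nf: "Lp_norm M p f = (1 powr p * a + 1 powr p * b) powr (1/p)"
  using LN[of 1 0 0 0] by (simp flip: eq_forms(3))

lemma Ng: "Lp_norm M p (\<lambda>x. (\<alpha> * indicator A x + \<beta> * indicator B x) *\<^sub>R f x)
   = (\<bar>\<alpha>\<bar> powr p * a + \<bar>\<beta>\<bar> powr p * b) powr (1/p)"
  using LN[of 0 1 \<alpha> \<beta>] by (simp flip: eq_forms(4))

lemma Nfg: "Lp_norm M p (\<lambda>x. f x + c *\<^sub>R ((\<alpha> * indicator A x + \<beta> * indicator B x) *\<^sub>R f x))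
   = (\<bar>1 + c * \<alpha>\<bar> powr p * a + \<bar>1 + c * \<beta>\<bar> powr p * b) powr (1/p)"
  unfolding eq_forms(1) by (rule LN)

lemma Ngf: "Lp_norm M p (\<lambda>x. (\<alpha> * indicator A x + \<beta> * indicator B x) *\<^sub>R f x + c *\<^sub>R f x)
   = (\<bar>\<alpha> + c\<bar> powr p * a + \<bar>\<beta> + c\<bar> powr p * b) powr (1/p)"
  unfolding eq_forms(2) using LN[of c 1 \<alpha> \<beta>] by (simp add: add.commute)


lemma pmono: "x powr p * a + y powr p * b \<le> x' powr p * a + y' powr p * b"
  if "0 \<le> x" "x \<le> x'" "0 \<le> y" "y \<le> y'"
  using that ab p1 by (intro add_mono mult_right_mono powr_mono2) auto

lemma left_real: assumes "p \<noteq> 2" shows "\<not> Lp_left_symmetric M p f"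
proof
  assume ls: "Lp_left_symmetric M p f"
  define t where "t = a / b"
  let ?g = "\<lambda>x. (1 * indicator A x + (- t) * indicator B x) *\<^sub>R f x"
  have "Lp_bj M p f ?g"
    unfolding Lp_bj_def
  proof
    fix c :: real
    show "Lp_norm M p f \<le> Lp_norm M p (\<lambda>x. f x + c *\<^sub>R ?g x)"
      unfolding Nfg Nf using L1_all[OF p1 ab(1), of b c] ab by (intro G_le) (simp add: t_def)
  qed
  then have bj: "Lp_bj M p ?g f" using ls Mem unfolding Lp_left_symmetric_def by blast
  obtain c where "\<bar>1 + c\<bar> powr p * a + \<bar>(- (a/b)) + c\<bar> powr p * b < \<bar>1\<bar> powr p * a + \<bar>- (a/b)\<bar> powr p * b"
    using L1_ex[OF p1 assms ab(1), of b] ab by auto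
  then have "Lp_norm M p (\<lambda>x. ?g x + c *\<^sub>R f x) < Lp_norm M p ?g"
    unfolding Ngf Ng by (intro G_less) (simp add: t_def)
  with bj show False unfolding Lp_bj_def by (meson not_le)
qed

lemma right_real: assumes "p > 1" "p \<noteq> 2" shows "\<not> Lp_right_symmetric M p f"
proof
  assume rs: "Lp_right_symmetric M p f"
  obtain t where t: "t > 0"
    "\<And>c. \<bar>1 + c\<bar> powr p * a + \<bar>(- t) + c\<bar> powr p * b \<ge> \<bar>1\<bar> powr p * a + \<bar>- t\<bar> powr p * b"
    "\<exists>c. \<bar>1 + c\<bar> powr p * a + \<bar>1 + c * (- t)\<bar> powr p * b < 1 powr p * a + 1 powr p * b"
    using L2[OF assms ab(1), of b] ab by auto
  let ?g = "\<lambda>x. (1 * indicator A x + (- t) * indicator B x) *\<^sub>R f x"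
  have "Lp_bj M p ?g f"
    unfolding Lp_bj_def
  proof
    fix c :: real
    show "Lp_norm M p ?g \<le> Lp_norm M p (\<lambda>x. ?g x + c *\<^sub>R f x)"
      unfolding Ngf Ng using t(2)[of c] by (intro G_le) simp
  qed
  then have bj: "Lp_bj M p f ?g" using rs Mem unfolding Lp_right_symmetric_def by blast
  obtain c where "\<bar>1 + c\<bar> powr p * a + \<bar>1 + c * (- t)\<bar> powr p * b < 1 powr p * a + 1 powr p * b"
    using t(3) by auto
  then have "Lp_norm M p (\<lambda>x. f x + c *\<^sub>R ?g x) < Lp_norm M p f"
    unfolding Nfg Nf by (intro G_less) simp
  with bj show False unfolding Lp_bj_def by (meson not_le)
qed

lemma right_real1: assumes "p = 1" shows "\<not> Lp_right_symmetric M p f"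
proof
  assume rs: "Lp_right_symmetric M p f"
  let ?g = "\<lambda>x. (1 * indicator A x + 0 * indicator B x) *\<^sub>R f x"
  have "Lp_bj M p ?g f"
    unfolding Lp_bj_def
  proof
    fix c :: real
    have "\<bar>c\<bar> * a \<le> \<bar>c\<bar> * b" using ab by (intro mult_left_mono) auto
    moreover have "1 * a \<le> (\<bar>1 + c\<bar> + \<bar>c\<bar>) * a" using ab by (intro mult_right_mono) auto
    ultimately have "a \<le> \<bar>1 + c\<bar> * a + \<bar>c\<bar> * b" by (simp add: algebra_simps)
    then show "Lp_norm M p ?g \<le> Lp_norm M p (\<lambda>x. ?g x + c *\<^sub>R f x)"
      unfolding Ngf Ng using assms by (intro G_le) simp
  qed
  then have bj: "Lp_bj M p f ?g" using rs Mem unfolding Lp_right_symmetric_def by blast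
  have "Lp_norm M p (\<lambda>x. f x + (-1) *\<^sub>R ?g x) < Lp_norm M p f"
    unfolding Nfg Nf using assms ab by (intro G_less) simp
  with bj show False unfolding Lp_bj_def by (meson not_le)
qed

lemma left_cplx: assumes "p \<noteq> 2" "complex_structure J" shows "\<not> Lp_left_symmetricC J M p f"
proof
  assume ls: "Lp_left_symmetricC J M p f"
  define t where "t = a / b"
  let ?g = "\<lambda>x. (1 * indicator A x + (- t) * indicator B x) *\<^sub>R f x"
  have "Lp_bjC J M p f ?g"
    unfolding Lp_bjC_def
  proof
    fix c :: complex
    have "1 powr p * a + 1 powr p * b \<le> \<bar>1 + Re c\<bar> powr p * a + \<bar>1 + Re c * (- (a/b))\<bar> powr p * b"
      using L1_all[OF p1 ab(1), of b "Re c"] ab by simp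
    also have "\<dots> \<le> cmod (1 + c * complex_of_real 1) powr p * a + cmod (1 + c * complex_of_real (- t)) powr p * b"
      using reb1[of c 1] reb1[of c "- t"] by (intro pmono) (auto simp: t_def)
    finally show "Lp_norm M p f \<le> Lp_norm M p (\<lambda>x. f x + cscale J c (?g x))"
      unfolding LNC1[OF assms(2)] Nf by (rule G_le)
  qed
  then have bj: "Lp_bjC J M p ?g f" using ls Mem unfolding Lp_left_symmetricC_def by blast
  obtain c where "\<bar>1 + c\<bar> powr p * a + \<bar>(- (a/b)) + c\<bar> powr p * b < \<bar>1\<bar> powr p * a + \<bar>- (a/b)\<bar> powr p * b"
    using L1_ex[OF p1 assms(1) ab(1), of b] ab by auto
  then have "Lp_norm M p (\<lambda>x. ?g x + cscale J (complex_of_real c) (f x)) < Lp_norm M p ?g"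
    unfolding LNC2[OF assms(2)] Ng cm2 by (intro G_less) (simp add: t_def)
  with bj show False unfolding Lp_bjC_def by (meson not_le)
qed

lemma right_cplx: assumes "p > 1" "p \<noteq> 2" "complex_structure J" shows "\<not> Lp_right_symmetricC J M p f"
proof
  assume rs: "Lp_right_symmetricC J M p f"
  obtain t where t: "t > 0"
    "\<And>c. \<bar>1 + c\<bar> powr p * a + \<bar>(- t) + c\<bar> powr p * b \<ge> \<bar>1\<bar> powr p * a + \<bar>- t\<bar> powr p * b"
    "\<exists>c. \<bar>1 + c\<bar> powr p * a + \<bar>1 + c * (- t)\<bar> powr p * b < 1 powr p * a + 1 powr p * b"
    using L2[OF assms(1,2) ab(1), of b] ab by auto
  let ?g = "\<lambda>x. (1 * indicator A x + (- t) * indicator B x) *\<^sub>R f x"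
  have "Lp_bjC J M p ?g f"
    unfolding Lp_bjC_def
  proof
    fix c :: complex
    have "\<bar>1\<bar> powr p * a + \<bar>- t\<bar> powr p * b \<le> \<bar>1 + Re c\<bar> powr p * a + \<bar>(- t) + Re c\<bar> powr p * b"
      using t(2) by simp
    also have "\<dots> \<le> cmod (complex_of_real 1 + c) powr p * a + cmod (complex_of_real (- t) + c) powr p * b"
      using reb2[of 1 c] reb2[of "- t" c] by (intro pmono) auto
    finally show "Lp_norm M p ?g \<le> Lp_norm M p (\<lambda>x. ?g x + cscale J c (f x))"
      unfolding LNC2[OF assms(3)] Ng by (rule G_le)
  qed
  then have bj: "Lp_bjC J M p f ?g" using rs Mem unfolding Lp_right_symmetricC_def by blast
  obtain c where "\<bar>1 + c\<bar> powr p * a + \<bar>1 + c * (- t)\<bar> powr p * b < 1 powr p * a + 1 powr p * b"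
    using t(3) by auto
  then have "Lp_norm M p (\<lambda>x. f x + cscale J (complex_of_real c) (?g x)) < Lp_norm M p f"
    unfolding LNC1[OF assms(3)] Nf of_real_mult[symmetric] cm1 by (intro G_less) simp
  with bj show False unfolding Lp_bjC_def by (meson not_le)
qed

end


lemma conv_all:
  fixes f :: "'a \<Rightarrow> 'b::real_normed_vector"
  assumes na: "non_atomic M" and fL: "f \<in> Lp M p" and p1: "p \<ge> 1" and nz: "Lp_norm M p f \<noteq> 0"
  shows "(p \<noteq> 2 \<longrightarrow> \<not> Lp_left_symmetric M p f)
    \<and> (p > 1 \<and> p \<noteq> 2 \<longrightarrow> \<not> Lp_right_symmetric M p f)
    \<and> (p = 1 \<longrightarrow> \<not> Lp_right_symmetric M p f)
    \<and> (\<forall>J. p \<noteq> 2 \<and> complex_structure J \<longrightarrow> \<not> Lp_left_symmetricC J M p f)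
    \<and> (\<forall>J. p > 1 \<and> p \<noteq> 2 \<and> complex_structure J \<longrightarrow> \<not> Lp_right_symmetricC J M p f)"
proof -
  have p0: "p > 0" using p1 by simp
  show ?thesis
  proof (rule prep_parts[OF na fL p0 nz])
    fix A B a b
    assume AB: "A \<in> sets M" "B \<in> sets M" "A \<inter> B = {}" and ab: "0 < a" "a < b"
      and I: "\<And>(u::'a \<Rightarrow> 'b) K K1 K2. (\<And>x. x \<in> space M \<Longrightarrow> norm (u x) = K x * norm (f x)) \<Longrightarrow> (\<And>x. x \<in> space M \<Longrightarrow> 0 \<le> K x)
         \<Longrightarrow> (\<And>x. x \<in> A \<Longrightarrow> K x = K1) \<Longrightarrow> (\<And>x. x \<in> B \<Longrightarrow> K x = K2)
         \<Longrightarrow> (\<integral>\<^sup>+x. ennreal (norm (u x) powr p) \<partial>M) = ennreal (K1 powr p * a + K2 powr p * b)"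
      and Mem: "\<And>\<alpha> \<beta>. (\<lambda>x. (\<alpha> * indicator A x + \<beta> * indicator B x) *\<^sub>R f x) \<in> Lp M p"
    have F: "\<And>(u::'a \<Rightarrow> 'b) K K1 K2. (\<And>x. x \<in> space M \<Longrightarrow> norm (u x) = K x * norm (f x)) \<Longrightarrow> (\<And>x. x \<in> space M \<Longrightarrow> 0 \<le> K x)
       \<Longrightarrow> (\<And>x. x \<in> A \<Longrightarrow> K x = K1) \<Longrightarrow> (\<And>x. x \<in> B \<Longrightarrow> K x = K2)
       \<Longrightarrow> Lp_norm M p u = (K1 powr p * a + K2 powr p * b) powr (1/p)"
    proof -
      fix u :: "'a \<Rightarrow> 'b" and K K1 K2
      assume "\<And>x. x \<in> space M \<Longrightarrow> norm (u x) = K x * norm (f x)" "\<And>x. x \<in> space M \<Longrightarrow> 0 \<le> K x"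
         "\<And>x. x \<in> A \<Longrightarrow> K x = K1" "\<And>x. x \<in> B \<Longrightarrow> K x = K2"
      from I[OF this] ab show "Lp_norm M p u = (K1 powr p * a + K2 powr p * b) powr (1/p)"
        by (simp add: Lp_norm_def del: ennreal_plus)
    qed
    have X: "A \<inter> B = {}" "0 < a" "a < b" "1 \<le> p" using AB ab p1 by auto
    have c1: "p \<noteq> 2 \<Longrightarrow> \<not> Lp_left_symmetric M p f"
      by (rule left_real[of A B a b p M f]) (rule X Mem F; assumption)+
    have c2: "p > 1 \<Longrightarrow> p \<noteq> 2 \<Longrightarrow> \<not> Lp_right_symmetric M p f"
      by (rule right_real[of A B a b p M f]) (rule X Mem F; assumption)+
    have c3: "p = 1 \<Longrightarrow> \<not> Lp_right_symmetric M p f"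
      by (rule right_real1[of A B a b p M f]) (rule X Mem F; assumption)+
    have c4: "p \<noteq> 2 \<Longrightarrow> complex_structure J \<Longrightarrow> \<not> Lp_left_symmetricC J M p f" for J
      by (rule left_cplx[of A B a b p M f]) (rule X Mem F; assumption)+
    have c5: "p > 1 \<Longrightarrow> p \<noteq> 2 \<Longrightarrow> complex_structure J \<Longrightarrow> \<not> Lp_right_symmetricC J M p f" for J
      by (rule right_cplx[of A B a b p M f]) (rule X Mem F; assumption)+
    show ?thesis using c1 c2 c3 c4 c5 by blast
  qed
qed

lemma conv:
  fixes f :: "'a \<Rightarrow> 'b::real_normed_vector"
  assumes na: "non_atomic M" and fL: "f \<in> Lp M p" and p1: "p \<ge> 1" and nz: "Lp_norm M p f \<noteq> 0"
  shows "p \<noteq> 2 \<Longrightarrow> \<not> Lp_left_symmetric M p f"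
    and "p > 1 \<Longrightarrow> p \<noteq> 2 \<Longrightarrow> \<not> Lp_right_symmetric M p f"
    and "p = 1 \<Longrightarrow> \<not> Lp_right_symmetric M p f"
    and "p \<noteq> 2 \<Longrightarrow> complex_structure J \<Longrightarrow> \<not> Lp_left_symmetricC J M p f"
    and "p > 1 \<Longrightarrow> p \<noteq> 2 \<Longrightarrow> complex_structure J \<Longrightarrow> \<not> Lp_right_symmetricC J M p f"
  using conv_all[OF assms] by blast+

theorem corollary3p15:
  fixes M :: "'a measure"
  assumes "complete_measure M"
    and "non_atomic M"
  shows
    "(sigma_finite_measure M \<and> frechet_norm TYPE('b::banach) \<longrightarrow>
        (\<forall>f::'a \<Rightarrow> 'b. f \<in> Lp M 1 \<and> Lp_norm M 1 f \<noteq> 0 \<longrightarrow> \<not> Lp_left_symmetric M 1 f))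
     \<and> (frechet_norm TYPE('b) \<longrightarrow>
        (\<forall>f::'a \<Rightarrow> 'b. f \<in> Lp M 1 \<and> Lp_norm M 1 f \<noteq> 0 \<longrightarrow> \<not> Lp_right_symmetric M 1 f))
     \<and> (\<forall>p::real. 1 < p \<and> p \<noteq> 2 \<and> frechet_norm TYPE('b) \<longrightarrow>
        (\<forall>f::'a \<Rightarrow> 'b. f \<in> Lp M p \<and> Lp_norm M p f \<noteq> 0 \<longrightarrow>
           \<not> Lp_left_symmetric M p f \<and> \<not> Lp_right_symmetric M p f))
     \<and> (\<forall>(p::real) (J::'b \<Rightarrow> 'b). 1 < p \<and> p \<noteq> 2 \<and> frechet_norm TYPE('b) \<and> complex_structure J \<longrightarrow>
        (\<forall>f::'a \<Rightarrow> 'b. f \<in> Lp M p \<and> Lp_norm M p f \<noteq> 0 \<longrightarrow>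
           \<not> Lp_left_symmetricC J M p f \<and> \<not> Lp_right_symmetricC J M p f))"
  proof (intro conjI impI allI)
  fix f :: "'a \<Rightarrow> 'b"
  assume "f \<in> Lp M 1 \<and> Lp_norm M 1 f \<noteq> 0"
  then show "\<not> Lp_left_symmetric M 1 f" using conv(1)[OF assms(2), of f 1] by simp
next
  fix f :: "'a \<Rightarrow> 'b"
  assume "f \<in> Lp M 1 \<and> Lp_norm M 1 f \<noteq> 0"
  then show "\<not> Lp_right_symmetric M 1 f" using conv(3)[OF assms(2), of f 1] by simp
next
  fix p :: real and f :: "'a \<Rightarrow> 'b"
  assume "1 < p \<and> p \<noteq> 2 \<and> frechet_norm TYPE('b)" "f \<in> Lp M p \<and> Lp_norm M p f \<noteq> 0"
  then show "\<not> Lp_left_symmetric M p f" "\<not> Lp_right_symmetric M p f"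
    using conv(1,2)[OF assms(2), of f p] by auto
next
  fix p :: real and J :: "'b \<Rightarrow> 'b" and f :: "'a \<Rightarrow> 'b"
  assume "1 < p \<and> p \<noteq> 2 \<and> frechet_norm TYPE('b) \<and> complex_structure J" "f \<in> Lp M p \<and> Lp_norm M p f \<noteq> 0"
  then show "\<not> Lp_left_symmetricC J M p f" "\<not> Lp_right_symmetricC J M p f"
    using conv(4,5)[OF assms(2), of f p J] by auto
qed

end
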